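(* Let $\Pi$ be a PTS such that, from every state $(\ell,\mathbf v)\in\mathcal S$, the induced process terminates almost surely, i.e. $\Pr[\exists n.\ \hat\ell_n\in\{\ell_t,\ell_f\}]=1$. Let $1\le M<\infty$. Then the greatest and least fixed points of $\mathsf{ptf}^M$ on $(\mathcal K^M,\sqsubseteq)$ coincide, so $\mathsf{ptf}^M$ has a unique fixed point in $\mathcal K^M$, and this fixed point is $\mathrm{vpf}$.
   Context: A probabilistic transition system (PTS) $\Pi$ consists of: a finite set $V$ of program variables (valuations $\mathbf v\in\mathbb R^V$); a finite set $R$ of sampling variables, each $r\in R$ with a probability distribution $\mathcal D(r)$ on $\mathbb R$; a finite set $L$ of locations containing two distinct terminal locations $\ell_t$ (normal termination) and $\ell_f$ (assertion violation); and a finite set of transitions $\tau=\langle\ell^{\mathrm{src}},\varphi,F_1,\dots,F_k\rangle$ with $\ell^{\mathrm{src}}\in L\setminus\{\ell_t,\ell_f\}$, a guard predicate $\varphi$, and forks $F_j=\langle\ell^{\mathrm{dst}}_j,p_j,\mathrm{upd}_j\rangle$ where $\ell^{\mathrm{dst}}_j\in L$, $p_j>0$, $\sum_jp_j=1$, $\mathrm{upd}_j:\mathbb R^V\times\mathbb R^R\to\mathbb R^V$ measurable. For every non-terminal $\ell$ and every $\mathbf v$ exactly one transition has $\ell^{\mathrm{src}}=\ell$ and $\mathbf v\models\varphi$ (the enabled transition). The state space is $\mathcal S=L\times\mathbb R^V$. The process started at a state $\sigma$ is $\hat\sigma_n=(\hat\ell_n,\hat{\mathbf v}_n)$ with $\hat\sigma_0=\sigma$;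 if $\hat\ell_n\notin\{\ell_t,\ell_f\}$, take the enabled transition at $\hat\sigma_n$, choose fork $j$ with probability $p_j$, draw $\hat{\mathbf u}_n\in\mathbb R^R$ with independent coordinates $\hat{\mathbf u}_n[r]\sim\mathcal D(r)$ (independent across steps), and set $\hat\sigma_{n+1}=(\ell^{\mathrm{dst}}_j,\mathrm{upd}_j(\hat{\mathbf v}_n,\hat{\mathbf u}_n))$; terminal locations are absorbing. The violation probability function is $\mathrm{vpf}(\ell,\mathbf v)=\Pr[\exists n.\ \hat\ell_n=\ell_f]$ for the process started at $(\ell,\mathbf v)$. For $M\in[1,\infty)$, $\mathcal K^M$ is the set of functions $f:\mathcal S\to[0,M]$ with $f(\ell_t,\mathbf v)=0$, $f(\ell_f,\mathbf v)=1$ for all $\mathbf v$, ordered pointwise. $\mathsf{ptf}^M:\mathcal K^M\to\mathcal K^M$: $\mathsf{ptf}^M(f)(\ell_f,\mathbf v)=1$, $\mathsf{ptf}^M(f)(\ell_t,\mathbf v)=0$, and for non-terminal $\ell$ whose enabled transition at $\mathbf v$ has forks $F_1,\dots,F_k$, $\mathsf{ptf}^M(f)(\ell,\mathbf v)=\sum_jp_j\mathbb E_{\mathbf r}[f(\ell^{\mathrm{dst}}_j,\mathrm{upd}_j(\mathbf v,\mathbf r))]$ with $\mathbf r$ having independent coordinates $\mathbf r[r]\sim\mathcal D(r)$. *)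

theory Defs
  imports "HOL-Probability.Probability"
begin

text \<open>
  Sampling variables: a finite type 'r, sample
  vectors are functions 'r \<Rightarrow> real; D r is the distribution of sampling
  variable r.  A fork is a triple (destination, probability, update); a
  transition is a triple (source, guard, list of forks); T is the finite set of
  transitions.  lt and lf are the terminal locations.
\<close>

type_synonym ('v,'r) upd = "('v \<Rightarrow> real) \<Rightarrow> ('r \<Rightarrow> real) \<Rightarrow> ('v \<Rightarrow> real)"
type_synonym ('l,'v,'r) fork = "'l \<times> real \<times> ('v,'r) upd"
type_synonym ('l,'v,'r) trans = "'l \<times> ('v \<Rightarrow> real) set \<times> ('l,'v,'r) fork list"

definition val_space :: "('v \<Rightarrow> real) measure" where
  "val_space = PiM UNIV (\<lambda>_. borel)"

definition sample_measure :: "('r \<Rightarrow> real measure) \<Rightarrow> ('r \<Rightarrow> real) measure" where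
  "sample_measure D = PiM UNIV D"

definition wf_pts ::
  "'l \<Rightarrow> 'l \<Rightarrow> ('r::finite \<Rightarrow> real measure) \<Rightarrow> ('l::finite,'v::finite,'r) trans set \<Rightarrow> bool" where
  "wf_pts lt lf D T \<longleftrightarrow>
     lt \<noteq> lf \<and> finite T \<and>
     (\<forall>r. prob_space (D r) \<and> sets (D r) = sets borel) \<and>
     (\<forall>(src, g, fs) \<in> T.
        src \<noteq> lt \<and> src \<noteq> lf \<and>
        g \<in> sets val_space \<and>
        fs \<noteq> [] \<and>
        (\<forall>(d, p, u) \<in> set fs. p > 0 \<and>
            case_prod u \<in> val_space \<Otimes>\<^sub>M sample_measure D \<rightarrow>\<^sub>M val_space) \<and>
        sum_list (map (\<lambda>(d, p, u). p) fs) = 1) \<and>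
     (\<forall>l v. l \<noteq> lt \<and> l \<noteq> lf \<longrightarrow> (\<exists>!t. t \<in> T \<and> fst t = l \<and> v \<in> fst (snd t)))"

definition enabled_forks :: "('l,'v,'r) trans set \<Rightarrow> 'l \<Rightarrow> ('v \<Rightarrow> real) \<Rightarrow> ('l,'v,'r) fork list" where
  "enabled_forks T l v = (THE fs. \<exists>g. (l, g, fs) \<in> T \<and> v \<in> g)"

text \<open>Fork selection from a uniform variable x in [0,1): fork j is selected iff
  x lies in [p_1+...+p_(j-1), p_1+...+p_j), which has probability p_j.\<close>
definition select_fork :: "('l,'v,'r) fork list \<Rightarrow> real \<Rightarrow> nat" where
  "select_fork fs x =
     (if \<exists>j < length fs. x < sum_list (map (\<lambda>(d, p, u). p) (take (Suc j) fs))
      then LEAST j. j < length fs \<and> x < sum_list (map (\<lambda>(d, p, u). p) (take (Suc j) fs))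
      else length fs - 1)"

definition pts_step ::
  "'l \<Rightarrow> 'l \<Rightarrow> ('l,'v,'r) trans set \<Rightarrow> 'l \<times> ('v \<Rightarrow> real) \<Rightarrow> real \<times> ('r \<Rightarrow> real)
     \<Rightarrow> 'l \<times> ('v \<Rightarrow> real)" where
  "pts_step lt lf T \<sigma> inp =
     (case \<sigma> of (l, v) \<Rightarrow>
       (if l = lt \<or> l = lf then (l, v)
        else (case enabled_forks T l v ! select_fork (enabled_forks T l v) (fst inp) of
                (d, p, u) \<Rightarrow> (d, u v (snd inp)))))"

definition input_space :: "('r \<Rightarrow> real measure) \<Rightarrow> (nat \<Rightarrow> real \<times> ('r \<Rightarrow> real)) measure" where
  "input_space D = PiM UNIV (\<lambda>_. uniform_measure lborel {0..<1} \<Otimes>\<^sub>M sample_measure D)"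

primrec pts_run ::
  "'l \<Rightarrow> 'l \<Rightarrow> ('l,'v,'r) trans set \<Rightarrow> 'l \<times> ('v \<Rightarrow> real) \<Rightarrow> (nat \<Rightarrow> real \<times> ('r \<Rightarrow> real))
     \<Rightarrow> nat \<Rightarrow> 'l \<times> ('v \<Rightarrow> real)" where
  "pts_run lt lf T \<sigma> \<omega> 0 = \<sigma>"
| "pts_run lt lf T \<sigma> \<omega> (Suc n) = pts_step lt lf T (pts_run lt lf T \<sigma> \<omega> n) (\<omega> n)"

definition ast :: "'l \<Rightarrow> 'l \<Rightarrow> ('r \<Rightarrow> real measure) \<Rightarrow> ('l,'v,'r) trans set \<Rightarrow> bool" where
  "ast lt lf D T \<longleftrightarrow>
     (\<forall>\<sigma>. \<P>(\<omega> in input_space D. \<exists>n. fst (pts_run lt lf T \<sigma> \<omega> n) \<in> {lt, lf}) = 1)"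

definition vpf :: "'l \<Rightarrow> 'l \<Rightarrow> ('r \<Rightarrow> real measure) \<Rightarrow> ('l,'v,'r) trans set
     \<Rightarrow> 'l \<times> ('v \<Rightarrow> real) \<Rightarrow> real" where
  "vpf lt lf D T \<sigma> = \<P>(\<omega> in input_space D. \<exists>n. fst (pts_run lt lf T \<sigma> \<omega> n) = lf)"

definition KM :: "'l \<Rightarrow> 'l \<Rightarrow> real \<Rightarrow> ('l \<times> ('v \<Rightarrow> real) \<Rightarrow> real) set" where
  "KM lt lf M = {f. (\<forall>\<sigma>. 0 \<le> f \<sigma> \<and> f \<sigma> \<le> M) \<and> (\<forall>v. f (lt, v) = 0 \<and> f (lf, v) = 1)}"

text \<open>The predicate transformer; expectations are (lower) nonnegative Lebesgue
  integrals, which are finite since f is bounded.\<close>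
definition ptf :: "'l \<Rightarrow> 'l \<Rightarrow> ('r \<Rightarrow> real measure) \<Rightarrow> ('l,'v,'r) trans set
     \<Rightarrow> ('l \<times> ('v \<Rightarrow> real) \<Rightarrow> real) \<Rightarrow> ('l \<times> ('v \<Rightarrow> real) \<Rightarrow> real)" where
  "ptf lt lf D T f \<sigma> =
     (case \<sigma> of (l, v) \<Rightarrow>
       if l = lf then 1 else if l = lt then 0
       else sum_list (map (\<lambda>(d, p, u).
              p * enn2real (\<integral>\<^sup>+ r. ennreal (f (d, u v r)) \<partial>sample_measure D))
            (enabled_forks T l v)))"

definition is_gfp_on :: "('a \<Rightarrow> real) set \<Rightarrow> (('a \<Rightarrow> real) \<Rightarrow> ('a \<Rightarrow> real)) \<Rightarrow> ('a \<Rightarrow> real) \<Rightarrow> bool" where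
  "is_gfp_on K F f \<longleftrightarrow> f \<in> K \<and> F f = f \<and> (\<forall>g\<in>K. F g = g \<longrightarrow> g \<le> f)"

definition is_lfp_on :: "('a \<Rightarrow> real) set \<Rightarrow> (('a \<Rightarrow> real) \<Rightarrow> ('a \<Rightarrow> real)) \<Rightarrow> ('a \<Rightarrow> real) \<Rightarrow> bool" where
  "is_lfp_on K F f \<longleftrightarrow> f \<in> K \<and> F f = f \<and> (\<forall>g\<in>K. F g = g \<longrightarrow> f \<le> g)"

end

theory Submission
  imports Defs
begin


abbreviation St :: "('l \<times> ('v \<Rightarrow> real)) measure" where
  "St \<equiv> count_space UNIV \<Otimes>\<^sub>M val_space"

abbreviation SS :: "('r \<Rightarrow> real measure) \<Rightarrow> (real \<times> ('r \<Rightarrow> real)) measure" where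
  "SS D \<equiv> uniform_measure lborel {0..<1::real} \<Otimes>\<^sub>M sample_measure D"

lemma sel_gen_meas:
  fixes c :: "nat \<Rightarrow> real"
  shows "(\<lambda>x::real. if \<exists>j<n. x < c j then LEAST j. j < n \<and> x < c j else n - 1) \<in> borel \<rightarrow>\<^sub>M count_space UNIV"
proof (rule measurable_If)
  have p: "\<And>j. Measurable.pred borel (\<lambda>x::real. j < n \<and> x < c j)" by measurable
  show "(\<lambda>x::real. LEAST j. j < n \<and> x < c j) \<in> borel \<rightarrow>\<^sub>M count_space UNIV"
    by (rule measurable_Least) (use p in auto)
  show "(\<lambda>x::real. n - 1) \<in> borel \<rightarrow>\<^sub>M count_space UNIV" by simp
  have "{x \<in> space borel. \<exists>j<n. x < c j} = (\<Union>j<n. {x. x < c j})" by auto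
  also have "\<dots> \<in> sets borel" by measurable
  finally show "{x \<in> space borel. \<exists>j<n. x < c j} \<in> sets borel" .
qed

lemma select_fork_meas: "select_fork fs \<in> borel \<rightarrow>\<^sub>M count_space UNIV"
  using sel_gen_meas[of "length fs" "\<lambda>j. sum_list (map (\<lambda>(d, p, u). p) (take (Suc j) fs))"]
  unfolding select_fork_def[abs_def] by simp

lemma select_fork_less: "fs \<noteq> [] \<Longrightarrow> select_fork fs x < length fs"
proof -
  let ?P = "\<lambda>j. j < length fs \<and> x < sum_list (map (\<lambda>(d, p, u). p) (take (Suc j) fs))"
  assume ne: "fs \<noteq> []"
  show ?thesis
  proof (cases "\<exists>j. ?P j")
    case True
    then have "?P (LEAST j. ?P j)" by (rule LeastI_ex)
    then show ?thesis using True unfolding select_fork_def by (simp del: sum_list_map_eq_sum_count)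
  next
    case False
    then show ?thesis using ne unfolding select_fork_def by auto
  qed
qed

lemma meas_countable_range:
  assumes "f \<in> M \<rightarrow>\<^sub>M count_space (UNIV :: 'c::countable set)" "\<And>x. x \<in> space M \<Longrightarrow> f x \<in> A"
  shows "f \<in> M \<rightarrow>\<^sub>M count_space A"
  unfolding measurable_count_space_eq2_countable
  using assms measurable_sets[OF assms(1), of "{a}" for a] by auto

context
  fixes lt lf :: "'l::finite" and D :: "'r::finite \<Rightarrow> real measure"
    and T :: "('l,'v::finite,'r) trans set"
  assumes wf: "wf_pts lt lf D T"
begin

lemma prob_sample: "prob_space (sample_measure D)"
  unfolding sample_measure_def using wf by (auto simp: wf_pts_def intro!: prob_space_PiM)

lemma prob_unif: "prob_space (uniform_measure lborel {0..<1::real})"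
  by (intro prob_space_uniform_measure) auto

lemma prob_SS: "prob_space (SS D)"
proof -
  interpret A: prob_space "uniform_measure lborel {0..<1::real}" by (rule prob_unif)
  interpret B: prob_space "sample_measure D" by (rule prob_sample)
  interpret pair_prob_space "uniform_measure lborel {0..<1::real}" "sample_measure D" ..
  show ?thesis by (rule P.prob_space_axioms)
qed

lemma prob_input: "prob_space (input_space D)"
  unfolding input_space_def using prob_SS by (auto intro!: prob_space_PiM)

lemma enabled:
  assumes "l \<noteq> lt" "l \<noteq> lf"
  shows "\<exists>g. (l, g, enabled_forks T l v) \<in> T \<and> v \<in> g"
proof -
  have "\<forall>l v. l \<noteq> lt \<and> l \<noteq> lf \<longrightarrow> (\<exists>!t. t \<in> T \<and> fst t = l \<and> v \<in> fst (snd t))"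
    using wf unfolding wf_pts_def by blast
  then have "\<exists>!t. t \<in> T \<and> fst t = l \<and> v \<in> fst (snd t)" using assms by blast
  then obtain t where t: "t \<in> T" "fst t = l" "v \<in> fst (snd t)"
    and u: "\<And>t'. t' \<in> T \<and> fst t' = l \<and> v \<in> fst (snd t') \<Longrightarrow> t' = t"
    by (elim ex1E) blast
  obtain g fs where tt: "t = (l, g, fs)" using t by (cases t) auto
  have "enabled_forks T l v = fs"
    unfolding enabled_forks_def
  proof (rule the_equality)
    show "\<exists>g. (l, g, fs) \<in> T \<and> v \<in> g" using t tt by auto
    fix fs' assume "\<exists>g. (l, g, fs') \<in> T \<and> v \<in> g"
    then obtain g' where "(l, g', fs') \<in> T" "v \<in> g'" by auto
    with u[of "(l,g',fs')"] tt show "fs' = fs" by auto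
  qed
  then show ?thesis using t tt by auto
qed

lemma trans_props:
  assumes "(l, g, fs) \<in> T"
  shows "l \<noteq> lt" "l \<noteq> lf" "g \<in> sets val_space" "fs \<noteq> []"
    "\<And>d p u. (d, p, u) \<in> set fs \<Longrightarrow> p > 0"
    "\<And>d p u. (d, p, u) \<in> set fs \<Longrightarrow> case_prod u \<in> val_space \<Otimes>\<^sub>M sample_measure D \<rightarrow>\<^sub>M val_space"
    "sum_list (map (\<lambda>(d, p, u). p) fs) = 1"
proof -
  have A: "\<forall>(src, g, fs) \<in> T.
        src \<noteq> lt \<and> src \<noteq> lf \<and>
        g \<in> sets val_space \<and>
        fs \<noteq> [] \<and>
        (\<forall>(d, p, u) \<in> set fs. p > 0 \<and>
            case_prod u \<in> val_space \<Otimes>\<^sub>M sample_measure D \<rightarrow>\<^sub>M val_space) \<and>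
        sum_list (map (\<lambda>(d, p, u). p) fs) = 1" using wf unfolding wf_pts_def by blast
  from bspec[OF A assms] show "l \<noteq> lt" "l \<noteq> lf" "g \<in> sets val_space" "fs \<noteq> []"
    "\<And>d p u. (d, p, u) \<in> set fs \<Longrightarrow> p > 0"
    "\<And>d p u. (d, p, u) \<in> set fs \<Longrightarrow> case_prod u \<in> val_space \<Otimes>\<^sub>M sample_measure D \<rightarrow>\<^sub>M val_space"
    "sum_list (map (\<lambda>(d, p, u). p) fs) = 1" by auto
qed

lemma enabled_eq:
  assumes "(l, g, fs) \<in> T" "v \<in> g"
  shows "enabled_forks T l v = fs"
proof -
  have l: "l \<noteq> lt" "l \<noteq> lf" using trans_props(1,2)[OF assms(1)] by auto
  have "\<forall>l v. l \<noteq> lt \<and> l \<noteq> lf \<longrightarrow> (\<exists>!t. t \<in> T \<and> fst t = l \<and> v \<in> fst (snd t))"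
    using wf unfolding wf_pts_def by blast
  then have u: "\<exists>!t. t \<in> T \<and> fst t = l \<and> v \<in> fst (snd t)" using l by blast
  obtain g' where g': "(l, g', enabled_forks T l v) \<in> T" "v \<in> g'" using enabled[OF l] by blast
  have "(l, g, fs) = (l, g', enabled_forks T l v)"
    using u assms g' by (elim ex1E) (metis fst_conv snd_conv)
  then show ?thesis by simp
qed

lemma meas_branch:
  assumes "(l, g, fs) \<in> T"
  shows "(\<lambda>(v, s). case fs ! select_fork fs (fst s) of (d, p, u) \<Rightarrow> (d, u v (snd s)))
     \<in> val_space \<Otimes>\<^sub>M SS D \<rightarrow>\<^sub>M (St :: ('l \<times> ('v \<Rightarrow> real)) measure)"
proof -
  have ne: "fs \<noteq> []" using trans_props(4)[OF assms] .
  have g: "(\<lambda>z :: ('v \<Rightarrow> real) \<times> (real \<times> ('r \<Rightarrow> real)). select_fork fs (fst (snd z)))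
      \<in> val_space \<Otimes>\<^sub>M SS D \<rightarrow>\<^sub>M count_space {..<length fs}"
    by (rule meas_countable_range) (auto intro!: measurable_compose[OF _ select_fork_meas] select_fork_less[OF ne])
  have f: "(\<lambda>z :: ('v \<Rightarrow> real) \<times> (real \<times> ('r \<Rightarrow> real)). case fs ! j of (d, p, u) \<Rightarrow> (d, u (fst z) (snd (snd z))))
      \<in> val_space \<Otimes>\<^sub>M SS D \<rightarrow>\<^sub>M (St :: ('l \<times> ('v \<Rightarrow> real)) measure)" if j: "j \<in> {..<length fs}" for j
  proof -
    obtain d p u where e: "fs ! j = (d, p, u)" by (cases "fs ! j") auto
    have "(d, p, u) \<in> set fs" using j e nth_mem[of j fs] by auto
    then have um: "case_prod u \<in> val_space \<Otimes>\<^sub>M sample_measure D \<rightarrow>\<^sub>M val_space"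
      using trans_props(6)[OF assms] by blast
    have "(\<lambda>z :: ('v \<Rightarrow> real) \<times> (real \<times> ('r \<Rightarrow> real)). u (fst z) (snd (snd z)))
        \<in> val_space \<Otimes>\<^sub>M SS D \<rightarrow>\<^sub>M val_space"
    proof -
      have pm: "(\<lambda>z :: ('v \<Rightarrow> real) \<times> (real \<times> ('r \<Rightarrow> real)). (fst z, snd (snd z)))
         \<in> val_space \<Otimes>\<^sub>M SS D \<rightarrow>\<^sub>M val_space \<Otimes>\<^sub>M sample_measure D" by measurable
      show ?thesis using measurable_compose[OF pm um] by simp
    qed
    then show ?thesis unfolding e by simp
  qed
  have "(\<lambda>z. (\<lambda>j z. case fs ! j of (d, p, u) \<Rightarrow> (d, u (fst z) (snd (snd z)))) (select_fork fs (fst (snd z))) z)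
      \<in> val_space \<Otimes>\<^sub>M SS D \<rightarrow>\<^sub>M (St :: ('l \<times> ('v \<Rightarrow> real)) measure)"
    by (rule measurable_compose_countable'[OF f g]) auto
  then show ?thesis by (simp add: case_prod_beta')
qed

lemma step_loc_meas:
  "(\<lambda>(v, s). pts_step lt lf T (l, v) s) \<in> val_space \<Otimes>\<^sub>M SS D \<rightarrow>\<^sub>M (St :: ('l \<times> ('v \<Rightarrow> real)) measure)"
proof (cases "l = lt \<or> l = lf")
  case True
  then have "(\<lambda>(v, s). pts_step lt lf T (l, v) s) = (\<lambda>z :: ('v \<Rightarrow> real) \<times> (real \<times> ('r \<Rightarrow> real)). (l, fst z))"
    by (auto simp: pts_step_def)
  then show ?thesis by simp
next
  case False
  let ?I = "{fs. \<exists>g. (l, g, fs) \<in> T}"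
  have finT: "finite T" using wf unfolding wf_pts_def by blast
  have finI: "finite ?I"
    by (rule finite_subset[OF _ finite_imageI[OF finT, of "\<lambda>t. snd (snd t)"]]) force
  have f: "(\<lambda>z :: ('v \<Rightarrow> real) \<times> (real \<times> ('r \<Rightarrow> real)).
       case fs ! select_fork fs (fst (snd z)) of (d, p, u) \<Rightarrow> (d, u (fst z) (snd (snd z))))
      \<in> val_space \<Otimes>\<^sub>M SS D \<rightarrow>\<^sub>M (St :: ('l \<times> ('v \<Rightarrow> real)) measure)" if "fs \<in> ?I" for fs
  proof -
    from that obtain g where "(l, g, fs) \<in> T" by auto
    from meas_branch[OF this] show ?thesis by (simp add: case_prod_beta')
  qed
  have g: "(\<lambda>z :: ('v \<Rightarrow> real) \<times> (real \<times> ('r \<Rightarrow> real)). enabled_forks T l (fst z))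
      \<in> val_space \<Otimes>\<^sub>M SS D \<rightarrow>\<^sub>M count_space ?I"
    unfolding measurable_count_space_eq2[OF finI]
  proof safe
    fix z :: "('v \<Rightarrow> real) \<times> (real \<times> ('r \<Rightarrow> real))"
    show "\<exists>g. (l, g, enabled_forks T l (fst z)) \<in> T" using enabled False by blast
  next
    fix fs g assume "(l, g, fs) \<in> T"
    have fin2: "finite {g. (l, g, fs) \<in> T}"
      by (rule finite_subset[OF _ finite_imageI[OF finT, of "\<lambda>t. fst (snd t)"]]) force
    have "(\<lambda>z :: ('v \<Rightarrow> real) \<times> (real \<times> ('r \<Rightarrow> real)). enabled_forks T l (fst z)) -` {fs}
        \<inter> space (val_space \<Otimes>\<^sub>M SS D) = (\<Union>{g. (l, g, fs) \<in> T}) \<times> space (SS D)"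
    proof -
      have e1: "a \<in> \<Union>{g. (l, g, fs) \<in> T} \<longleftrightarrow> enabled_forks T l a = fs" for a
      proof
        assume "a \<in> \<Union>{g. (l, g, fs) \<in> T}"
        then show "enabled_forks T l a = fs" using enabled_eq by auto
      next
        assume a: "enabled_forks T l a = fs"
        obtain g where "(l, g, enabled_forks T l a) \<in> T" "a \<in> g" using enabled False by blast
        then show "a \<in> \<Union>{g. (l, g, fs) \<in> T}" using a by auto
      qed
      show ?thesis
      proof (rule set_eqI)
        fix z :: "('v \<Rightarrow> real) \<times> (real \<times> ('r \<Rightarrow> real))"
        obtain a b where z: "z = (a, b)" by (cases z)
        have L: "z \<in> (\<lambda>z :: ('v \<Rightarrow> real) \<times> (real \<times> ('r \<Rightarrow> real)). enabled_forks T l (fst z)) -` {fs}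
          \<inter> space (val_space \<Otimes>\<^sub>M SS D) \<longleftrightarrow> enabled_forks T l a = fs \<and> b \<in> space (SS D)"
          by (simp add: z space_pair_measure val_space_def space_PiM)
        have R: "z \<in> (\<Union>{g. (l, g, fs) \<in> T}) \<times> space (SS D) \<longleftrightarrow> a \<in> \<Union>{g. (l, g, fs) \<in> T} \<and> b \<in> space (SS D)"
          unfolding z by (rule mem_Sigma_iff)
        show "z \<in> (\<lambda>z :: ('v \<Rightarrow> real) \<times> (real \<times> ('r \<Rightarrow> real)). enabled_forks T l (fst z)) -` {fs}
          \<inter> space (val_space \<Otimes>\<^sub>M SS D) \<longleftrightarrow> z \<in> (\<Union>{g. (l, g, fs) \<in> T}) \<times> space (SS D)"
          unfolding L R e1 ..
      qed
    qed
    also have "\<dots> \<in> sets (val_space \<Otimes>\<^sub>M SS D)"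
    proof (rule pair_measureI)
      show "\<Union>{g. (l, g, fs) \<in> T} \<in> sets val_space"
        using fin2 trans_props(3) by (intro sets.finite_Union) auto
    qed (rule sets.top)
    finally show "(\<lambda>z :: ('v \<Rightarrow> real) \<times> (real \<times> ('r \<Rightarrow> real)). enabled_forks T l (fst z)) -` {fs}
        \<inter> space (val_space \<Otimes>\<^sub>M SS D) \<in> sets (val_space \<Otimes>\<^sub>M SS D)" .
  qed
  have "(\<lambda>z. (\<lambda>fs z. case fs ! select_fork fs (fst (snd z)) of (d, p, u) \<Rightarrow> (d, u (fst z) (snd (snd z))))
       (enabled_forks T l (fst z)) z) \<in> val_space \<Otimes>\<^sub>M SS D \<rightarrow>\<^sub>M (St :: ('l \<times> ('v \<Rightarrow> real)) measure)"
    by (rule measurable_compose_countable'[OF f g]) (use finI in \<open>auto intro: countable_finite\<close>)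
  moreover have "(\<lambda>(v, s). pts_step lt lf T (l, v) s) = (\<lambda>z. (\<lambda>fs z. case fs ! select_fork fs (fst (snd z)) of (d, p, u) \<Rightarrow> (d, u (fst z) (snd (snd z))))
       (enabled_forks T l (fst z)) z)"
    using False by (auto simp: pts_step_def fun_eq_iff)
  ultimately show ?thesis by simp
qed

lemma step_meas:
  "(\<lambda>(\<sigma>, s). pts_step lt lf T \<sigma> s) \<in> (St :: ('l \<times> ('v \<Rightarrow> real)) measure) \<Otimes>\<^sub>M SS D \<rightarrow>\<^sub>M St"
proof -
  have a: "(\<lambda>(l, z). (\<lambda>(v, s). pts_step lt lf T (l, v) s) z)
      \<in> count_space UNIV \<Otimes>\<^sub>M (val_space \<Otimes>\<^sub>M SS D) \<rightarrow>\<^sub>M (St :: ('l \<times> ('v \<Rightarrow> real)) measure)"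
    by (rule measurable_pair_measure_countable1) (auto intro: step_loc_meas)
  have b: "(\<lambda>x :: ('l \<times> ('v \<Rightarrow> real)) \<times> (real \<times> ('r \<Rightarrow> real)). (fst (fst x), (snd (fst x), snd x)))
     \<in> St \<Otimes>\<^sub>M SS D \<rightarrow>\<^sub>M count_space UNIV \<Otimes>\<^sub>M (val_space \<Otimes>\<^sub>M SS D)"
    by (intro measurable_Pair) (auto intro: measurable_compose[OF measurable_fst measurable_fst]
        measurable_compose[OF measurable_fst measurable_snd] measurable_snd)
  from measurable_compose[OF b a] show ?thesis by (simp add: case_prod_beta')
qed

end


lemma run_shift: "pts_run lt lf T \<sigma> (case_nat s \<omega>) (Suc n) = pts_run lt lf T (pts_step lt lf T \<sigma> s) \<omega> n"
  by (induction n) auto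

lemma step_term: "fst \<sigma> = lt \<or> fst \<sigma> = lf \<Longrightarrow> pts_step lt lf T \<sigma> s = \<sigma>"
  by (cases \<sigma>) (auto simp: pts_step_def)

lemma run_term: "fst \<sigma> = lt \<or> fst \<sigma> = lf \<Longrightarrow> pts_run lt lf T \<sigma> \<omega> n = \<sigma>"
  by (induction n) (auto simp: step_term)

lemma run_absorb: "fst (pts_run lt lf T \<sigma> \<omega> n) = lt \<or> fst (pts_run lt lf T \<sigma> \<omega> n) = lf
   \<Longrightarrow> pts_run lt lf T \<sigma> \<omega> (n + k) = pts_run lt lf T \<sigma> \<omega> n"
  by (induction k) (auto simp: step_term)

lemma fork_integral:
  fixes fs :: "('l,'v,'r) fork list" and F :: "nat \<Rightarrow> ennreal"
  assumes pos: "\<And>d p u. (d, p, u) \<in> set fs \<Longrightarrow> p > 0"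
    and sum1: "sum_list (map (\<lambda>(d, p, u). p) fs) = 1" and ne: "fs \<noteq> []"
  shows "(\<integral>\<^sup>+ x. F (select_fork fs x) \<partial>uniform_measure lborel {0..<1::real})
     = (\<Sum>j<length fs. ennreal (fst (snd (fs ! j))) * F j)"
proof -
  define n where "n = length fs"
  define q where "q i = fst (snd (fs ! i))" for i
  define c where "c j = (\<Sum>i<j. q i)" for j
  have qpos: "i < n \<Longrightarrow> q i > 0" for i
  proof -
    assume "i < n"
    then have "fs ! i \<in> set fs" unfolding n_def by simp
    moreover obtain d p u where e: "fs ! i = (d, p, u)" by (cases "fs ! i")
    ultimately have "p > 0" using pos by auto
    then show "q i > 0" unfolding q_def e by simp
  qed
  have take_eq: "sum_list (map (\<lambda>(d, p, u). p) (take j fs)) = c j" if "j \<le> n" for j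
  proof -
    have "sum_list (map (\<lambda>(d, p, u). p) (take j fs)) = (\<Sum>i = 0..<length (take j fs). map (\<lambda>(d, p, u). p) (take j fs) ! i)"
      by (simp add: sum_list_sum_nth)
    also have "\<dots> = (\<Sum>i<j. q i)"
      using that unfolding n_def q_def by (intro sum.cong) (auto simp: atLeast0LessThan split: prod.splits)
    finally show ?thesis unfolding c_def .
  qed
  have cn: "c n = 1" using take_eq[of n] sum1 unfolding n_def by simp
  have c0: "c 0 = 0" unfolding c_def by simp
  have cmono: "c i \<le> c j" if "i \<le> j" "j \<le> n" for i j
    unfolding c_def using that qpos by (intro sum_mono2) (auto intro: less_imp_le)
  have cSuc: "c (Suc j) = c j + q j" for j unfolding c_def by simp
  have sel: "select_fork fs x = (if \<exists>j<n. x < c (Suc j) then LEAST j. j < n \<and> x < c (Suc j) else n - 1)" for x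
  proof -
    have "(\<lambda>j. j < length fs \<and> x < sum_list (map (\<lambda>(d, p, u). p) (take (Suc j) fs)))
        = (\<lambda>j. j < n \<and> x < c (Suc j))"
    proof (rule ext)
      fix j
      show "(j < length fs \<and> x < sum_list (map (\<lambda>(d, p, u). p) (take (Suc j) fs)))
        = (j < n \<and> x < c (Suc j))"
      proof (cases "j < n")
        case True
        then have "Suc j \<le> n" by simp
        from take_eq[OF this] True show ?thesis unfolding n_def by simp
      next
        case False then show ?thesis unfolding n_def by simp
      qed
    qed
    then show ?thesis unfolding select_fork_def n_def[symmetric] by auto
  qed
  have key: "c j \<le> x \<and> x < c (Suc j) \<longleftrightarrow> select_fork fs x = j" if x: "0 \<le> x" "x < 1" and j: "j < n" for x j
  proof -
    have npos: "n > 0" using ne unfolding n_def by simp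
    have ex: "\<exists>j<n. x < c (Suc j)"
      using x cn npos by (intro exI[of _ "n - 1"]) auto
    define k where "k = (LEAST j. j < n \<and> x < c (Suc j))"
    have sk: "select_fork fs x = k" using sel ex unfolding k_def by simp
    have k: "k < n" "x < c (Suc k)" using LeastI_ex[of "\<lambda>j. j < n \<and> x < c (Suc j)"] ex unfolding k_def by auto
    have kmin: "c (Suc i) \<le> x" if "i < k" for i
      using not_less_Least[of i "\<lambda>j. j < n \<and> x < c (Suc j)"] that k unfolding k_def by auto
    have ck: "c k \<le> x"
    proof (cases k)
      case 0 then show ?thesis using c0 x by simp
    next
      case (Suc i) then show ?thesis using kmin[of i] by simp
    qed
    show ?thesis
    proof
      assume a: "c j \<le> x \<and> x < c (Suc j)"
      show "select_fork fs x = j"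
      proof (rule ccontr)
        assume "select_fork fs x \<noteq> j"
        then have "j < k \<or> k < j" using sk by auto
        then show False
        proof
          assume "j < k" then show False using kmin[of j] a by simp
        next
          assume "k < j" then have "c (Suc k) \<le> c j" using cmono j by simp
          then show False using a k by simp
        qed
      qed
    next
      assume "select_fork fs x = j" then show "c j \<le> x \<and> x < c (Suc j)" using sk ck k by simp
    qed
  qed
  have pw: "F (select_fork fs x) * indicator {0..<1} x = (\<Sum>j<n. F j * indicator {c j..<c (Suc j)} x)" for x
  proof (cases "0 \<le> x \<and> x < 1")
    case True
    have sl: "select_fork fs x < n" using select_fork_less[OF ne] unfolding n_def .
    have "(\<Sum>j<n. F j * indicator {c j..<c (Suc j)} x) = (\<Sum>j<n. if j = select_fork fs x then F j else 0)"
      using key[of x] True by (intro sum.cong) (auto simp: indicator_def)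
    also have "\<dots> = F (select_fork fs x)" using sl by (simp add: sum.delta)
    finally show ?thesis using True by (simp add: indicator_def)
  next
    case False
    have "indicator {c j..<c (Suc j)} x = (0::ennreal)" if "j < n" for j
    proof -
      have "0 \<le> c j" using cmono[of 0 j] c0 that by simp
      moreover have "c (Suc j) \<le> 1" using cmono[of "Suc j" n] cn that by simp
      ultimately show ?thesis using False by (auto simp: indicator_def)
    qed
    then have s0: "(\<Sum>j<n. F j * indicator {c j..<c (Suc j)} x) = 0" by simp
    have "indicator {0..<1} x = (0::ennreal)" using False by (simp add: indicator_def)
    then show ?thesis using s0 by simp
  qed
  have Fm: "(\<lambda>x. F (select_fork fs x)) \<in> borel_measurable borel"
    by (rule measurable_compose[OF select_fork_meas]) (simp add: measurable_count_space_eq1)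
  have "(\<integral>\<^sup>+ x. F (select_fork fs x) \<partial>uniform_measure lborel {0..<1::real})
      = (\<integral>\<^sup>+ x. F (select_fork fs x) * indicator {0..<1} x \<partial>lborel) / emeasure lborel {0..<1::real}"
    by (rule nn_integral_uniform_measure) (use Fm in auto)
  also have "\<dots> = (\<integral>\<^sup>+ x. F (select_fork fs x) * indicator {0..<1} x \<partial>lborel)" by (simp add: divide_ennreal_def)
  also have "\<dots> = (\<integral>\<^sup>+ x. (\<Sum>j<n. F j * indicator {c j..<c (Suc j)} x) \<partial>lborel)" by (simp add: pw)
  also have "\<dots> = (\<Sum>j<n. \<integral>\<^sup>+ x. F j * indicator {c j..<c (Suc j)} x \<partial>lborel)"
    by (rule nn_integral_sum) auto
  also have "\<dots> = (\<Sum>j<n. ennreal (q j) * F j)"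
  proof (rule sum.cong)
    fix j assume jn: "j \<in> {..<n}"
    have qj: "q j > 0" using qpos jn by simp
    have "(\<integral>\<^sup>+ x. F j * indicator {c j..<c (Suc j)} x \<partial>lborel) = F j * emeasure lborel {c j..<c (Suc j)}"
      by (rule nn_integral_cmult_indicator) auto
    also have "\<dots> = F j * ennreal (q j)" using cSuc[of j] qj by (simp add: emeasure_lborel_Ico)
    finally show "(\<integral>\<^sup>+ x. F j * indicator {c j..<c (Suc j)} x \<partial>lborel) = ennreal (q j) * F j"
      by (simp add: mult.commute)
  qed simp
  finally show ?thesis unfolding n_def q_def .
qed



context
  fixes lt lf :: "'l::finite" and D :: "'r::finite \<Rightarrow> real measure"
    and T :: "('l,'v::finite,'r) trans set"
  assumes wf: "wf_pts lt lf D T"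
begin

lemma comp_meas: "(\<lambda>x. snd x n) \<in> (St :: ('l \<times> ('v \<Rightarrow> real)) measure) \<Otimes>\<^sub>M input_space D \<rightarrow>\<^sub>M SS D"
  unfolding input_space_def
  by (rule measurable_compose[OF measurable_snd measurable_component_singleton]) simp

lemma run_meas: "(\<lambda>x. pts_run lt lf T (fst x) (snd x) n) \<in> (St :: ('l \<times> ('v \<Rightarrow> real)) measure) \<Otimes>\<^sub>M input_space D \<rightarrow>\<^sub>M St"
proof (induction n)
  case 0
  then show ?case by simp
next
  case (Suc n)
  have "(\<lambda>x. (pts_run lt lf T (fst x) (snd x) n, snd x n)) \<in> (St :: ('l \<times> ('v \<Rightarrow> real)) measure) \<Otimes>\<^sub>M input_space D \<rightarrow>\<^sub>M St \<Otimes>\<^sub>M SS D"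
    by (rule measurable_Pair[OF Suc comp_meas])
  from measurable_compose[OF this step_meas[OF wf]] show ?case by simp
qed

lemma run_meas1: "(\<lambda>\<omega>. pts_run lt lf T \<sigma> \<omega> n) \<in> input_space D \<rightarrow>\<^sub>M (St :: ('l \<times> ('v \<Rightarrow> real)) measure)"
proof -
  have "(\<lambda>\<omega>. (\<sigma>, \<omega>)) \<in> input_space D \<rightarrow>\<^sub>M (St :: ('l \<times> ('v \<Rightarrow> real)) measure) \<Otimes>\<^sub>M input_space D"
    by (rule measurable_Pair) (auto simp: val_space_def space_PiM space_pair_measure)
  from measurable_compose[OF this run_meas] show ?thesis by simp
qed

definition EE :: "nat \<Rightarrow> ('l \<times> ('v \<Rightarrow> real) \<Rightarrow> real) \<Rightarrow> 'l \<times> ('v \<Rightarrow> real) \<Rightarrow> real" where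
  "EE n h \<sigma> = enn2real (\<integral>\<^sup>+ \<omega>. ennreal (h (pts_run lt lf T \<sigma> \<omega> n)) \<partial>input_space D)"

lemma int_bound:
  assumes "\<And>\<sigma>. h \<sigma> \<le> M"
  shows "(\<integral>\<^sup>+ \<omega>. ennreal (h (pts_run lt lf T \<sigma> \<omega> n)) \<partial>input_space D) \<le> ennreal M"
proof -
  interpret P: prob_space "input_space D" by (rule prob_input[OF wf])
  have "(\<integral>\<^sup>+ \<omega>. ennreal (h (pts_run lt lf T \<sigma> \<omega> n)) \<partial>input_space D) \<le> (\<integral>\<^sup>+ \<omega>. ennreal M \<partial>input_space D)"
    by (rule nn_integral_mono) (simp add: assms ennreal_leI)
  also have "\<dots> = ennreal M" by (simp add: P.emeasure_space_1)
  finally show ?thesis .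
qed

lemma EE_meas:
  assumes hm: "h \<in> borel_measurable (St :: ('l \<times> ('v \<Rightarrow> real)) measure)"
  shows "EE n h \<in> borel_measurable (St :: ('l \<times> ('v \<Rightarrow> real)) measure)"
proof -
  interpret P: prob_space "input_space D" by (rule prob_input[OF wf])
  have r: "(\<lambda>x. ennreal (h (pts_run lt lf T (fst x) (snd x) n))) \<in> borel_measurable ((St :: ('l \<times> ('v \<Rightarrow> real)) measure) \<Otimes>\<^sub>M input_space D)"
    by (rule measurable_compose[OF measurable_compose[OF run_meas hm] measurable_ennreal])
  have "(\<lambda>\<sigma>. \<integral>\<^sup>+ \<omega>. ennreal (h (pts_run lt lf T \<sigma> \<omega> n)) \<partial>input_space D) \<in> borel_measurable (St :: ('l \<times> ('v \<Rightarrow> real)) measure)"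
    by (rule P.borel_measurable_nn_integral) (use r in \<open>simp add: case_prod_beta'\<close>)
  then show ?thesis unfolding EE_def[abs_def] by measurable
qed

lemma EE_bounds:
  assumes "\<And>\<sigma>. 0 \<le> h \<sigma> \<and> h \<sigma> \<le> M"
  shows "0 \<le> EE n h \<sigma> \<and> EE n h \<sigma> \<le> M"
proof -
  have M: "0 \<le> M" using assms[of \<sigma>] by linarith
  have "EE n h \<sigma> \<le> enn2real (ennreal M)" unfolding EE_def
    by (rule enn2real_mono[OF int_bound]) (use assms in auto)
  then show ?thesis using M by (simp add: EE_def)
qed

lemma EE_term:
  assumes "fst \<sigma> = lt \<or> fst \<sigma> = lf" "\<And>\<sigma>. 0 \<le> h \<sigma>"
  shows "EE n h \<sigma> = h \<sigma>"
proof -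
  interpret P: prob_space "input_space D" by (rule prob_input[OF wf])
  show ?thesis unfolding EE_def using assms by (simp add: run_term P.emeasure_space_1)
qed

lemma decomp:
  assumes hm: "h \<in> borel_measurable (St :: ('l \<times> ('v \<Rightarrow> real)) measure)"
  shows "(\<integral>\<^sup>+ \<omega>. ennreal (h (pts_run lt lf T \<sigma> \<omega> (Suc n))) \<partial>input_space D)
    = (\<integral>\<^sup>+ s. (\<integral>\<^sup>+ \<omega>. ennreal (h (pts_run lt lf T (pts_step lt lf T \<sigma> s) \<omega> n)) \<partial>input_space D) \<partial>SS D)"
proof -
  interpret SS: prob_space "SS D" by (rule prob_SS[OF wf])
  interpret S: sequence_space "SS D" by unfold_locales
  interpret P: prob_space "input_space D" by (rule prob_input[OF wf])
  define F where "F \<omega> = ennreal (h (pts_run lt lf T \<sigma> \<omega> (Suc n)))" for \<omega>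
  have Fm: "F \<in> borel_measurable (input_space D)"
    unfolding F_def by (rule measurable_compose[OF measurable_compose[OF run_meas1 hm] measurable_ennreal])
  have cm: "(\<lambda>(s, \<omega>). case_nat s \<omega>) \<in> SS D \<Otimes>\<^sub>M input_space D \<rightarrow>\<^sub>M input_space D"
    unfolding input_space_def by measurable
  have "(\<integral>\<^sup>+ \<omega>. F \<omega> \<partial>input_space D) = integral\<^sup>N (distr (SS D \<Otimes>\<^sub>M input_space D) (input_space D) (\<lambda>(s, \<omega>). case_nat s \<omega>)) F"
    unfolding input_space_def using S.PiM_iter by simp
  also have "\<dots> = (\<integral>\<^sup>+ x. F (case_prod case_nat x) \<partial>(SS D \<Otimes>\<^sub>M input_space D))"
    by (rule nn_integral_distr[OF cm]) (simp add: Fm)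
  also have "\<dots> = (\<integral>\<^sup>+ s. \<integral>\<^sup>+ \<omega>. F (case_nat s \<omega>) \<partial>input_space D \<partial>SS D)"
    using P.nn_integral_fst[OF measurable_compose[OF cm Fm]] by simp
  finally show ?thesis unfolding F_def run_shift .
qed

lemma one_step:
  assumes Gm: "G \<in> borel_measurable (St :: ('l \<times> ('v \<Rightarrow> real)) measure)"
    and Gb: "\<And>\<sigma>. 0 \<le> G \<sigma> \<and> G \<sigma> \<le> M"
    and l: "l \<noteq> lt" "l \<noteq> lf"
  shows "enn2real (\<integral>\<^sup>+ s. ennreal (G (pts_step lt lf T (l, v) s)) \<partial>SS D) = ptf lt lf D T G (l, v)"
proof -
  interpret U: prob_space "uniform_measure lborel {0..<1::real}" by (rule prob_unif[OF wf])
  interpret Smp: prob_space "sample_measure D" by (rule prob_sample[OF wf])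
  define fs where "fs = enabled_forks T l v"
  obtain g where g: "(l, g, fs) \<in> T" using enabled[OF wf l] unfolding fs_def by blast
  define H where "H j = (\<integral>\<^sup>+ r. ennreal (G (case fs ! j of (d, p, u) \<Rightarrow> (d, u v r))) \<partial>sample_measure D)" for j
  have M: "0 \<le> M" using Gb[of "(l, v)"] by linarith
  have Hb: "H j \<le> ennreal M" for j
  proof -
    have "H j \<le> (\<integral>\<^sup>+ r. ennreal M \<partial>sample_measure D)" unfolding H_def
      by (rule nn_integral_mono) (simp add: Gb ennreal_leI)
    also have "\<dots> = ennreal M" by (simp add: Smp.emeasure_space_1)
    finally show ?thesis .
  qed
  have pm: "(\<lambda>s. ((l, v), s)) \<in> SS D \<rightarrow>\<^sub>M (St :: ('l \<times> ('v \<Rightarrow> real)) measure) \<Otimes>\<^sub>M SS D"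
    by (rule measurable_Pair) (auto simp: val_space_def space_PiM space_pair_measure)
  have m: "(\<lambda>s. ennreal (G (pts_step lt lf T (l, v) s))) \<in> borel_measurable (SS D)"
    using measurable_compose[OF measurable_compose[OF measurable_compose[OF pm step_meas[OF wf]] Gm] measurable_ennreal]
    by simp
  have st: "pts_step lt lf T (l, v) (x, r) = (case fs ! select_fork fs x of (d, p, u) \<Rightarrow> (d, u v r))" for x r
    using l unfolding fs_def by (simp add: pts_step_def)
  have "(\<integral>\<^sup>+ s. ennreal (G (pts_step lt lf T (l, v) s)) \<partial>SS D)
      = (\<integral>\<^sup>+ x. \<integral>\<^sup>+ r. ennreal (G (pts_step lt lf T (l, v) (x, r))) \<partial>sample_measure D \<partial>uniform_measure lborel {0..<1::real})"
    by (rule Smp.nn_integral_fst[symmetric, OF m])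
  also have "\<dots> = (\<integral>\<^sup>+ x. H (select_fork fs x) \<partial>uniform_measure lborel {0..<1::real})"
    unfolding st H_def by simp
  also have "\<dots> = (\<Sum>j<length fs. ennreal (fst (snd (fs ! j))) * H j)"
    by (rule fork_integral) (use trans_props[OF wf g] in auto)
  finally have e1: "enn2real (\<integral>\<^sup>+ s. ennreal (G (pts_step lt lf T (l, v) s)) \<partial>SS D)
      = enn2real (\<Sum>j<length fs. ennreal (fst (snd (fs ! j))) * H j)" by simp
  have pj: "0 \<le> fst (snd (fs ! j))" if "j < length fs" for j
  proof -
    obtain d p u where e: "fs ! j = (d, p, u)" by (cases "fs ! j")
    have "(d, p, u) \<in> set fs" using that e nth_mem[of j fs] by auto
    then have "p > 0" using trans_props(5)[OF wf g] by blast
    then show ?thesis using e by simp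
  qed
  have "enn2real (\<Sum>j<length fs. ennreal (fst (snd (fs ! j))) * H j)
      = (\<Sum>j<length fs. enn2real (ennreal (fst (snd (fs ! j))) * H j))"
  proof -
    have fin: "ennreal (fst (snd (fs ! j))) * H j < top" for j
    proof -
      have "H j < top" using le_less_trans[OF Hb ennreal_less_top] .
      then show ?thesis by (simp add: ennreal_mult_less_top)
    qed
    show ?thesis using enn2real_sum[of "{..<length fs}" "\<lambda>j. ennreal (fst (snd (fs ! j))) * H j"] fin
      by (simp add: o_def)
  qed
  also have "\<dots> = (\<Sum>j<length fs. fst (snd (fs ! j)) * enn2real (H j))"
    by (rule sum.cong) (auto simp: enn2real_mult pj)
  also have "\<dots> = ptf lt lf D T G (l, v)"
  proof -
    have "ptf lt lf D T G (l, v) = sum_list (map (\<lambda>(d, p, u).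
              p * enn2real (\<integral>\<^sup>+ r. ennreal (G (d, u v r)) \<partial>sample_measure D)) fs)"
      using l unfolding ptf_def fs_def by simp
    also have "\<dots> = (\<Sum>j = 0..<length fs. (\<lambda>(d, p, u).
              p * enn2real (\<integral>\<^sup>+ r. ennreal (G (d, u v r)) \<partial>sample_measure D)) (fs ! j))"
      by (simp add: sum_list_sum_nth)
    also have "\<dots> = (\<Sum>j<length fs. fst (snd (fs ! j)) * enn2real (H j))"
      unfolding H_def atLeast0LessThan by (intro sum.cong) (auto split: prod.splits)
    finally show ?thesis by simp
  qed
  finally show ?thesis using e1 by simp
qed

end


context
  fixes lt lf :: "'l::finite" and D :: "'r::finite \<Rightarrow> real measure"
    and T :: "('l,'v::finite,'r) trans set"
  assumes wf: "wf_pts lt lf D T"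
begin

lemma ltlf: "lt \<noteq> lf" using wf unfolding wf_pts_def by blast

lemma EE_Suc:
  assumes hm: "h \<in> borel_measurable (St :: ('l \<times> ('v \<Rightarrow> real)) measure)"
    and hb: "\<And>\<sigma>. 0 \<le> h \<sigma> \<and> h \<sigma> \<le> M"
    and ht: "\<And>v. h (lt, v) = 0" "\<And>v. h (lf, v) = 1"
  shows "EE lt lf D T (Suc n) h \<sigma> = ptf lt lf D T (EE lt lf D T n h) \<sigma>"
proof -
  obtain l v where s: "\<sigma> = (l, v)" by (cases \<sigma>)
  have h0: "\<And>\<sigma>. 0 \<le> h \<sigma>" using hb by blast
  show ?thesis
  proof (cases "l = lf")
    case True
    then show ?thesis using EE_term[OF wf _ h0, of \<sigma> "Suc n"] s ht by (simp add: ptf_def)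
  next
    case nf: False
    show ?thesis
    proof (cases "l = lt")
      case True
      then show ?thesis using EE_term[OF wf _ h0, of \<sigma> "Suc n"] s ht nf by (simp add: ptf_def)
    next
      case nt: False
      have "EE lt lf D T (Suc n) h \<sigma> = enn2real (\<integral>\<^sup>+ s. (\<integral>\<^sup>+ \<omega>. ennreal (h (pts_run lt lf T (pts_step lt lf T \<sigma> s) \<omega> n)) \<partial>input_space D) \<partial>SS D)"
        unfolding EE_def[OF wf] decomp[OF wf hm] ..
      also have "\<dots> = enn2real (\<integral>\<^sup>+ s. ennreal (EE lt lf D T n h (pts_step lt lf T \<sigma> s)) \<partial>SS D)"
      proof -
        have "(\<integral>\<^sup>+ \<omega>. ennreal (h (pts_run lt lf T \<sigma>' \<omega> n)) \<partial>input_space D) = ennreal (EE lt lf D T n h \<sigma>')" for \<sigma>'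
        proof -
          have "(\<integral>\<^sup>+ \<omega>. ennreal (h (pts_run lt lf T \<sigma>' \<omega> n)) \<partial>input_space D) < top"
            using le_less_trans[OF int_bound[OF wf] ennreal_less_top] hb by blast
          then show ?thesis unfolding EE_def[OF wf] by simp
        qed
        then show ?thesis by simp
      qed
      also have "\<dots> = ptf lt lf D T (EE lt lf D T n h) \<sigma>"
        unfolding s by (rule one_step[OF wf EE_meas[OF wf hm] EE_bounds[OF wf hb] nt nf])
      finally show ?thesis .
    qed
  qed
qed

lemma ptf_mono:
  assumes fg: "\<And>\<sigma>. f \<sigma> \<le> g \<sigma>" and gM: "\<And>\<sigma>. g \<sigma> \<le> M"
  shows "ptf lt lf D T f \<sigma> \<le> ptf lt lf D T g \<sigma>"
proof -
  interpret Smp: prob_space "sample_measure D" by (rule prob_sample[OF wf])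
  obtain l v where s: "\<sigma> = (l, v)" by (cases \<sigma>)
  show ?thesis
  proof (cases "l = lt \<or> l = lf")
    case True then show ?thesis unfolding s ptf_def by auto
  next
    case False
    then have nt: "l \<noteq> lt" "l \<noteq> lf" by auto
    obtain gg where g: "(l, gg, enabled_forks T l v) \<in> T" using enabled[OF wf nt] by blast
    have "sum_list (map (\<lambda>(d, p, u). p * enn2real (\<integral>\<^sup>+ r. ennreal (f (d, u v r)) \<partial>sample_measure D)) (enabled_forks T l v))
       \<le> sum_list (map (\<lambda>(d, p, u). p * enn2real (\<integral>\<^sup>+ r. ennreal (g (d, u v r)) \<partial>sample_measure D)) (enabled_forks T l v))"
    proof (rule sum_list_mono)
      fix x assume x: "x \<in> set (enabled_forks T l v)"
      obtain d p u where e: "x = (d, p, u)" by (cases x)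
      have p: "p > 0" using trans_props(5)[OF wf g] x e by blast
      have "(\<integral>\<^sup>+ r. ennreal (g (d, u v r)) \<partial>sample_measure D) \<le> (\<integral>\<^sup>+ r. ennreal M \<partial>sample_measure D)"
        by (rule nn_integral_mono) (simp add: gM ennreal_leI)
      also have "\<dots> = ennreal M" by (simp add: Smp.emeasure_space_1)
      finally have fin: "(\<integral>\<^sup>+ r. ennreal (g (d, u v r)) \<partial>sample_measure D) < top"
        using le_less_trans ennreal_less_top by blast
      have "enn2real (\<integral>\<^sup>+ r. ennreal (f (d, u v r)) \<partial>sample_measure D) \<le> enn2real (\<integral>\<^sup>+ r. ennreal (g (d, u v r)) \<partial>sample_measure D)"
        by (rule enn2real_mono[OF _ fin]) (rule nn_integral_mono, simp add: fg ennreal_leI)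
      then show "(\<lambda>(d, p, u). p * enn2real (\<integral>\<^sup>+ r. ennreal (f (d, u v r)) \<partial>sample_measure D)) x
          \<le> (\<lambda>(d, p, u). p * enn2real (\<integral>\<^sup>+ r. ennreal (g (d, u v r)) \<partial>sample_measure D)) x"
        using p e by (simp add: mult_left_mono)
    qed
    then show ?thesis using nt unfolding s ptf_def by simp
  qed
qed

lemma EE_0: "(\<And>\<sigma>. 0 \<le> h \<sigma>) \<Longrightarrow> EE lt lf D T 0 h \<sigma> = h \<sigma>"
proof -
  interpret P: prob_space "input_space D" by (rule prob_input[OF wf])
  assume "\<And>\<sigma>. 0 \<le> h \<sigma>"
  then show ?thesis unfolding EE_def[OF wf] by (simp add: P.emeasure_space_1)
qed

lemma ev_sets: "{\<omega> \<in> space (input_space D). fst (pts_run lt lf T \<sigma> \<omega> n) \<in> L} \<in> sets (input_space D)"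
proof -
  have m: "(\<lambda>\<omega>. fst (pts_run lt lf T \<sigma> \<omega> n)) \<in> input_space D \<rightarrow>\<^sub>M count_space UNIV"
    by (rule measurable_compose[OF run_meas1[OF wf] measurable_fst])
  have "{\<omega> \<in> space (input_space D). fst (pts_run lt lf T \<sigma> \<omega> n) \<in> L}
      = (\<lambda>\<omega>. fst (pts_run lt lf T \<sigma> \<omega> n)) -` L \<inter> space (input_space D)" by auto
  also have "\<dots> \<in> sets (input_space D)" by (rule measurable_sets[OF m]) simp
  finally show ?thesis .
qed

end


definition b0 :: "'l \<Rightarrow> 'l \<times> ('v \<Rightarrow> real) \<Rightarrow> real" where
  "b0 lf \<sigma> = (if fst \<sigma> = lf then 1 else 0)"

definition u0 :: "'l \<Rightarrow> 'l \<Rightarrow> real \<Rightarrow> 'l \<times> ('v \<Rightarrow> real) \<Rightarrow> real" where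
  "u0 lt lf M \<sigma> = (if fst \<sigma> = lf then 1 else if fst \<sigma> = lt then 0 else M)"

lemma squeeze:
  fixes A C :: "nat \<Rightarrow> real"
  assumes "\<And>n. A n \<le> x \<and> x \<le> C n" "\<And>n. A n \<le> y \<and> y \<le> C n" "(\<lambda>n. C n - A n) \<longlonglongrightarrow> 0"
  shows "x = y"
proof -
  have "\<bar>x - y\<bar> \<le> C n - A n" for n using assms(1,2)[of n] by linarith
  then have "\<bar>x - y\<bar> \<le> 0" by (intro LIMSEQ_le_const[OF assms(3)]) auto
  then show ?thesis by simp
qed

context
  fixes lt lf :: "'l::finite" and D :: "'r::finite \<Rightarrow> real measure"
    and T :: "('l,'v::finite,'r) trans set" and M :: real
  assumes wf: "wf_pts lt lf D T" and M1: "1 \<le> M"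
begin

abbreviation "Alf n \<sigma> \<equiv> {\<omega> \<in> space (input_space D). fst (pts_run lt lf T \<sigma> \<omega> n) \<in> {lf}}"
abbreviation "ANT n \<sigma> \<equiv> {\<omega> \<in> space (input_space D). fst (pts_run lt lf T \<sigma> \<omega> n) \<in> - {lt, lf}}"

lemma b0_meas: "(b0 lf :: 'l \<times> ('v \<Rightarrow> real) \<Rightarrow> real) \<in> borel_measurable St"
  unfolding b0_def[abs_def]
  by (rule measurable_compose[OF measurable_fst, of "\<lambda>l. if l = lf then 1 else 0"]) simp

lemma u0_meas: "(u0 lt lf M :: 'l \<times> ('v \<Rightarrow> real) \<Rightarrow> real) \<in> borel_measurable St"
  unfolding u0_def[abs_def]
  by (rule measurable_compose[OF measurable_fst, of "\<lambda>l. if l = lf then 1 else if l = lt then 0 else M"]) simp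

lemma b0_props: "0 \<le> b0 lf \<sigma> \<and> b0 lf \<sigma> \<le> M" "b0 lf (lt, v) = 0" "b0 lf (lf, v) = 1"
  using M1 ltlf[OF wf] by (auto simp: b0_def)

lemma u0_props: "0 \<le> u0 lt lf M \<sigma> \<and> u0 lt lf M \<sigma> \<le> M" "u0 lt lf M (lt, v) = 0" "u0 lt lf M (lf, v) = 1"
  using M1 ltlf[OF wf] by (auto simp: u0_def)

lemma A_prob: "EE lt lf D T n (b0 lf) \<sigma> = measure (input_space D) (Alf n \<sigma>)"
proof -
  have "(\<integral>\<^sup>+ \<omega>. ennreal (b0 lf (pts_run lt lf T \<sigma> \<omega> n)) \<partial>input_space D)
      = (\<integral>\<^sup>+ \<omega>. indicator (Alf n \<sigma>) \<omega> \<partial>input_space D)"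
    by (rule nn_integral_cong) (auto simp: b0_def indicator_def)
  also have "\<dots> = emeasure (input_space D) (Alf n \<sigma>)"
    by (rule nn_integral_indicator[OF ev_sets[OF wf]])
  finally show ?thesis unfolding EE_def[OF wf] measure_def by simp
qed

lemma C_prob: "EE lt lf D T n (u0 lt lf M) \<sigma> = measure (input_space D) (Alf n \<sigma>) + M * measure (input_space D) (ANT n \<sigma>)"
proof -
  interpret P: prob_space "input_space D" by (rule prob_input[OF wf])
  have "(\<integral>\<^sup>+ \<omega>. ennreal (u0 lt lf M (pts_run lt lf T \<sigma> \<omega> n)) \<partial>input_space D)
      = (\<integral>\<^sup>+ \<omega>. indicator (Alf n \<sigma>) \<omega> + ennreal M * indicator (ANT n \<sigma>) \<omega> \<partial>input_space D)"
    by (rule nn_integral_cong) (auto simp: u0_def indicator_def)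
  also have "\<dots> = (\<integral>\<^sup>+ \<omega>. indicator (Alf n \<sigma>) \<omega> \<partial>input_space D) + (\<integral>\<^sup>+ \<omega>. ennreal M * indicator (ANT n \<sigma>) \<omega> \<partial>input_space D)"
  proof (rule nn_integral_add)
    have [measurable]: "Alf n \<sigma> \<in> sets (input_space D)" "ANT n \<sigma> \<in> sets (input_space D)"
      by (rule ev_sets[OF wf])+
    show "(\<lambda>\<omega>. indicator (Alf n \<sigma>) \<omega> :: ennreal) \<in> borel_measurable (input_space D)" by measurable
    show "(\<lambda>\<omega>. ennreal M * indicator (ANT n \<sigma>) \<omega>) \<in> borel_measurable (input_space D)" by measurable
  qed
  also have "\<dots> = emeasure (input_space D) (Alf n \<sigma>) + ennreal M * emeasure (input_space D) (ANT n \<sigma>)"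
    by (simp only: nn_integral_indicator[OF ev_sets[OF wf]] nn_integral_cmult_indicator[OF ev_sets[OF wf]])
  also have "\<dots> = ennreal (measure (input_space D) (Alf n \<sigma>) + M * measure (input_space D) (ANT n \<sigma>))"
    using M1 by (simp add: P.emeasure_eq_measure ennreal_plus ennreal_mult)
  finally have e: "(\<integral>\<^sup>+ \<omega>. ennreal (u0 lt lf M (pts_run lt lf T \<sigma> \<omega> n)) \<partial>input_space D)
     = ennreal (measure (input_space D) (Alf n \<sigma>) + M * measure (input_space D) (ANT n \<sigma>))" .
  have X0: "0 \<le> measure (input_space D) (Alf n \<sigma>) + M * measure (input_space D) (ANT n \<sigma>)"
    using M1 by simp
  show ?thesis unfolding EE_def[OF wf] e by (rule enn2real_ennreal[OF X0])
qed

lemma A_Suc: "EE lt lf D T (Suc n) (b0 lf) = ptf lt lf D T (EE lt lf D T n (b0 lf))"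
  using EE_Suc[OF wf b0_meas b0_props(1) b0_props(2) b0_props(3)] by (simp add: fun_eq_iff)

lemma C_Suc: "EE lt lf D T (Suc n) (u0 lt lf M) = ptf lt lf D T (EE lt lf D T n (u0 lt lf M))"
  using EE_Suc[OF wf u0_meas u0_props(1) u0_props(2) u0_props(3)] by (simp add: fun_eq_iff)

lemma A_bound: "EE lt lf D T n (b0 lf) \<sigma> \<le> M"
  using EE_bounds[OF wf, where h="b0 lf" and M=M] b0_props(1) by blast

lemma C_bound: "EE lt lf D T n (u0 lt lf M) \<sigma> \<le> M"
  using EE_bounds[OF wf, where h="u0 lt lf M" and M=M] u0_props(1) by blast

lemma fix_between:
  assumes f: "f \<in> KM lt lf M" and fp: "ptf lt lf D T f = f"
  shows "EE lt lf D T n (b0 lf) \<sigma> \<le> f \<sigma> \<and> f \<sigma> \<le> EE lt lf D T n (u0 lt lf M) \<sigma>"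
proof (induction n arbitrary: \<sigma>)
  case 0
  have fb: "0 \<le> f \<sigma> \<and> f \<sigma> \<le> M" "f (lt, v) = 0" "f (lf, v) = 1" for \<sigma> v using f unfolding KM_def by (cases \<sigma>, auto)+
  obtain l v where s: "\<sigma> = (l, v)" by (cases \<sigma>)
  show ?case
    using fb(1)[of \<sigma>] fb(2,3)[of v] s
    by (simp add: EE_0[OF wf] b0_props u0_props b0_def u0_def)
next
  case (Suc n)
  have fM: "f \<sigma> \<le> M" for \<sigma> using f unfolding KM_def by (cases \<sigma>) auto
  have "EE lt lf D T (Suc n) (b0 lf) \<sigma> \<le> ptf lt lf D T f \<sigma>"
    unfolding A_Suc by (rule ptf_mono[OF wf]) (use Suc fM in auto)
  moreover have "ptf lt lf D T f \<sigma> \<le> EE lt lf D T (Suc n) (u0 lt lf M) \<sigma>"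
    unfolding C_Suc by (rule ptf_mono[OF wf]) (use Suc C_bound in auto)
  ultimately show ?case using fp by simp
qed

end


context
  fixes lt lf :: "'l::finite" and D :: "'r::finite \<Rightarrow> real measure"
    and T :: "('l,'v::finite,'r) trans set" and M :: real
  assumes wf: "wf_pts lt lf D T" and M1: "1 \<le> M"
begin

lemma vpf_between:
  "EE lt lf D T n (b0 lf) \<sigma> \<le> vpf lt lf D T \<sigma> \<and> vpf lt lf D T \<sigma> \<le> EE lt lf D T n (u0 lt lf M) \<sigma>"
proof -
  interpret P: prob_space "input_space D" by (rule prob_input[OF wf])
  define E where "E = {\<omega> \<in> space (input_space D). \<exists>k. fst (pts_run lt lf T \<sigma> \<omega> k) = lf}"
  have Eeq: "E = (\<Union>k. Alf lt lf D T k \<sigma>)" unfolding E_def by auto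
  have Es: "E \<in> sets (input_space D)" unfolding Eeq using ev_sets[OF wf] by blast
  have vE: "vpf lt lf D T \<sigma> = measure (input_space D) E" unfolding vpf_def E_def ..
  have a: "EE lt lf D T n (b0 lf) \<sigma> \<le> vpf lt lf D T \<sigma>"
    unfolding A_prob[OF wf M1] vE by (rule P.finite_measure_mono[OF _ Es]) (auto simp: Eeq)
  have sub: "E \<subseteq> Alf lt lf D T n \<sigma> \<union> ANT lt lf D T n \<sigma>"
  proof
    fix \<omega> assume "\<omega> \<in> E"
    then obtain k where sp: "\<omega> \<in> space (input_space D)" and k: "fst (pts_run lt lf T \<sigma> \<omega> k) = lf"
      unfolding E_def by auto
    show "\<omega> \<in> Alf lt lf D T n \<sigma> \<union> ANT lt lf D T n \<sigma>"
    proof (cases "fst (pts_run lt lf T \<sigma> \<omega> n) = lt \<or> fst (pts_run lt lf T \<sigma> \<omega> n) = lf")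
      case True
      have "fst (pts_run lt lf T \<sigma> \<omega> n) = lf"
      proof (cases "n \<le> k")
        case True
        then have "pts_run lt lf T \<sigma> \<omega> k = pts_run lt lf T \<sigma> \<omega> n"
          using run_absorb[of lt lf T \<sigma> \<omega> n "k - n"] \<open>fst (pts_run lt lf T \<sigma> \<omega> n) = lt \<or> fst (pts_run lt lf T \<sigma> \<omega> n) = lf\<close>
          by simp
        then show ?thesis using k by simp
      next
        case False
        then have "pts_run lt lf T \<sigma> \<omega> n = pts_run lt lf T \<sigma> \<omega> k"
          using run_absorb[of lt lf T \<sigma> \<omega> k "n - k"] k by simp
        then show ?thesis using k by simp
      qed
      then show ?thesis using sp by simp
    next
      case False
      then show ?thesis using sp by simp
    qed
  qed
  have "vpf lt lf D T \<sigma> \<le> measure (input_space D) (Alf lt lf D T n \<sigma> \<union> ANT lt lf D T n \<sigma>)"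
    unfolding vE by (rule P.finite_measure_mono[OF sub]) (intro sets.Un ev_sets[OF wf])
  also have "\<dots> \<le> measure (input_space D) (Alf lt lf D T n \<sigma>) + measure (input_space D) (ANT lt lf D T n \<sigma>)"
    by (rule measure_subadditive[OF ev_sets[OF wf] ev_sets[OF wf]]) (simp_all add: P.emeasure_eq_measure)
  also have "\<dots> \<le> measure (input_space D) (Alf lt lf D T n \<sigma>) + M * measure (input_space D) (ANT lt lf D T n \<sigma>)"
    using M1 by (simp add: mult_le_cancel_right1)
  finally have c: "vpf lt lf D T \<sigma> \<le> EE lt lf D T n (u0 lt lf M) \<sigma>"
    unfolding C_prob[OF wf M1] .
  show ?thesis using a c by simp
qed

lemma width:
  assumes ast: "ast lt lf D T"
  shows "(\<lambda>n. EE lt lf D T n (u0 lt lf M) \<sigma> - EE lt lf D T n (b0 lf) \<sigma>) \<longlonglongrightarrow> 0"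
proof -
  interpret P: prob_space "input_space D" by (rule prob_input[OF wf])
  define Et where "Et = {\<omega> \<in> space (input_space D). \<exists>n. fst (pts_run lt lf T \<sigma> \<omega> n) \<in> {lt, lf}}"
  have Eteq: "Et = (\<Union>k. {\<omega> \<in> space (input_space D). fst (pts_run lt lf T \<sigma> \<omega> k) \<in> {lt, lf}})"
    unfolding Et_def by auto
  have Ets: "Et \<in> sets (input_space D)" unfolding Eteq using ev_sets[OF wf] by blast
  have p1: "measure (input_space D) Et = 1" using ast unfolding ast_def Et_def by blast
  have inter: "(\<Inter>n. ANT lt lf D T n \<sigma>) = space (input_space D) - Et" unfolding Et_def by auto
  have dec: "decseq (\<lambda>n. ANT lt lf D T n \<sigma>)"
  proof (rule decseq_SucI)
    fix n
    show "ANT lt lf D T (Suc n) \<sigma> \<subseteq> ANT lt lf D T n \<sigma>"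
    proof
      fix \<omega> assume a: "\<omega> \<in> ANT lt lf D T (Suc n) \<sigma>"
      show "\<omega> \<in> ANT lt lf D T n \<sigma>"
      proof (rule ccontr)
        assume "\<omega> \<notin> ANT lt lf D T n \<sigma>"
        then have "fst (pts_run lt lf T \<sigma> \<omega> n) = lt \<or> fst (pts_run lt lf T \<sigma> \<omega> n) = lf" using a by auto
        then have "pts_run lt lf T \<sigma> \<omega> (n + 1) = pts_run lt lf T \<sigma> \<omega> n" by (rule run_absorb)
        then show False using a \<open>fst (pts_run lt lf T \<sigma> \<omega> n) = lt \<or> fst (pts_run lt lf T \<sigma> \<omega> n) = lf\<close> by auto
      qed
    qed
  qed
  have "(\<lambda>n. measure (input_space D) (ANT lt lf D T n \<sigma>)) \<longlonglongrightarrow> measure (input_space D) (\<Inter>n. ANT lt lf D T n \<sigma>)"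
    by (rule P.finite_Lim_measure_decseq[OF _ dec]) (use ev_sets[OF wf] in blast)
  also have "measure (input_space D) (\<Inter>n. ANT lt lf D T n \<sigma>) = 0"
    unfolding inter using P.prob_compl[OF Ets] p1 by simp
  finally have "(\<lambda>n. M * measure (input_space D) (ANT lt lf D T n \<sigma>)) \<longlonglongrightarrow> M * 0"
    by (intro tendsto_mult tendsto_const)
  then show ?thesis unfolding C_prob[OF wf M1] A_prob[OF wf M1] by simp
qed

lemma main_result:
  assumes ast: "ast lt lf D T"
  shows "vpf lt lf D T \<in> KM lt lf M \<and> ptf lt lf D T (vpf lt lf D T) = vpf lt lf D T
     \<and> (\<forall>f \<in> KM lt lf M. ptf lt lf D T f = f \<longrightarrow> f = vpf lt lf D T)"
proof -
  interpret P: prob_space "input_space D" by (rule prob_input[OF wf])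
  have vK: "vpf lt lf D T \<in> KM lt lf M"
  proof -
    have "0 \<le> vpf lt lf D T \<sigma> \<and> vpf lt lf D T \<sigma> \<le> M" for \<sigma>
      using M1 P.prob_le_1 unfolding vpf_def by (auto intro: order_trans)
    moreover have "vpf lt lf D T (lt, v) = 0" for v
      using ltlf[OF wf] unfolding vpf_def by (simp add: run_term)
    moreover have "vpf lt lf D T (lf, v) = 1" for v
      unfolding vpf_def by (simp add: run_term P.prob_space)
    ultimately show ?thesis unfolding KM_def by auto
  qed
  have vM: "vpf lt lf D T \<sigma> \<le> M" for \<sigma> using vK unfolding KM_def by (cases \<sigma>) auto
  have fixp: "ptf lt lf D T (vpf lt lf D T) = vpf lt lf D T"
  proof
    fix \<sigma>
    have w: "(\<lambda>n. EE lt lf D T (Suc n) (u0 lt lf M) \<sigma> - EE lt lf D T (Suc n) (b0 lf) \<sigma>) \<longlonglongrightarrow> 0"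
      using LIMSEQ_Suc[OF width[OF ast]] .
    have b1: "EE lt lf D T (Suc n) (b0 lf) \<sigma> \<le> ptf lt lf D T (vpf lt lf D T) \<sigma> \<and>
        ptf lt lf D T (vpf lt lf D T) \<sigma> \<le> EE lt lf D T (Suc n) (u0 lt lf M) \<sigma>" for n
    proof -
      have "EE lt lf D T (Suc n) (b0 lf) \<sigma> \<le> ptf lt lf D T (vpf lt lf D T) \<sigma>"
        unfolding A_Suc[OF wf M1] by (rule ptf_mono[OF wf]) (use vpf_between vM in auto)
      moreover have "ptf lt lf D T (vpf lt lf D T) \<sigma> \<le> EE lt lf D T (Suc n) (u0 lt lf M) \<sigma>"
        unfolding C_Suc[OF wf M1] by (rule ptf_mono[OF wf]) (use vpf_between C_bound[OF wf M1] in auto)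
      ultimately show ?thesis ..
    qed
    show "ptf lt lf D T (vpf lt lf D T) \<sigma> = vpf lt lf D T \<sigma>"
      by (rule squeeze[OF b1 _ w]) (rule vpf_between)
  qed
  have uniq: "f = vpf lt lf D T" if "f \<in> KM lt lf M" "ptf lt lf D T f = f" for f
  proof
    fix \<sigma>
    show "f \<sigma> = vpf lt lf D T \<sigma>"
      by (rule squeeze[OF fix_between[OF wf M1 that] vpf_between width[OF ast]])
  qed
  show ?thesis using vK fixp uniq by blast
qed

end

theorem mainTheorem6:
  fixes lt lf :: "'l::finite" and D :: "'r::finite \<Rightarrow> real measure"
    and T :: "('l,'v::finite,'r) trans set" and M :: real
  assumes "wf_pts lt lf D T"
    and "ast lt lf D T"
    and "1 \<le> M"
  shows "(\<exists>f. is_gfp_on (KM lt lf M) (ptf lt lf D T) f)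
       \<and> (\<exists>g. is_lfp_on (KM lt lf M) (ptf lt lf D T) g)
       \<and> (\<forall>f g. is_gfp_on (KM lt lf M) (ptf lt lf D T) f
                \<longrightarrow> is_lfp_on (KM lt lf M) (ptf lt lf D T) g \<longrightarrow> f = g)
       \<and> vpf lt lf D T \<in> KM lt lf M
       \<and> ptf lt lf D T (vpf lt lf D T) = vpf lt lf D T
       \<and> (\<forall>f \<in> KM lt lf M. ptf lt lf D T f = f \<longrightarrow> f = vpf lt lf D T)"
proof -
  have R: "vpf lt lf D T \<in> KM lt lf M \<and> ptf lt lf D T (vpf lt lf D T) = vpf lt lf D T
     \<and> (\<forall>f \<in> KM lt lf M. ptf lt lf D T f = f \<longrightarrow> f = vpf lt lf D T)"
    by (rule main_result[OF assms(1) assms(3) assms(2)])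
  have vK: "vpf lt lf D T \<in> KM lt lf M" using R by (rule conjunct1)
  have fp: "ptf lt lf D T (vpf lt lf D T) = vpf lt lf D T" using R by blast
  have un: "f = vpf lt lf D T" if "f \<in> KM lt lf M" "ptf lt lf D T f = f" for f
    using R that by blast
  have le: "\<forall>g\<in>KM lt lf M. ptf lt lf D T g = g \<longrightarrow> g \<le> vpf lt lf D T"
  proof (intro ballI impI)
    fix g assume "g \<in> KM lt lf M" "ptf lt lf D T g = g"
    then have "g = vpf lt lf D T" by (rule un)
    then show "g \<le> vpf lt lf D T" by simp
  qed
  have ge: "\<forall>g\<in>KM lt lf M. ptf lt lf D T g = g \<longrightarrow> vpf lt lf D T \<le> g"
  proof (intro ballI impI)
    fix g assume "g \<in> KM lt lf M" "ptf lt lf D T g = g"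
    then have "g = vpf lt lf D T" by (rule un)
    then show "vpf lt lf D T \<le> g" by simp
  qed
  have g: "is_gfp_on (KM lt lf M) (ptf lt lf D T) (vpf lt lf D T)"
    unfolding is_gfp_on_def using vK fp le by blast
  have l: "is_lfp_on (KM lt lf M) (ptf lt lf D T) (vpf lt lf D T)"
    unfolding is_lfp_on_def using vK fp ge by blast
  have e: "\<forall>f g. is_gfp_on (KM lt lf M) (ptf lt lf D T) f
                \<longrightarrow> is_lfp_on (KM lt lf M) (ptf lt lf D T) g \<longrightarrow> f = g"
  proof (intro allI impI)
    fix f g assume f: "is_gfp_on (KM lt lf M) (ptf lt lf D T) f" and g: "is_lfp_on (KM lt lf M) (ptf lt lf D T) g"
    have "f = vpf lt lf D T" using f unfolding is_gfp_on_def by (blast intro: un)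
    moreover have "g = vpf lt lf D T" using g unfolding is_lfp_on_def by (blast intro: un)
    ultimately show "f = g" by simp
  qed
  show ?thesis using g l e R by blast
qed

end
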